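(* Let $G=(V,E)$ be a planar biconnected graph with $\deg(v)\ge 3$ for every $v\in V$. Then the SPQR-tree of $G$ contains at least one Q-node that is adjacent to a P-node or an R-node.
   Context: The SPQR-tree (with Q-nodes) of a biconnected graph $G$ is the standard decomposition tree of $G$ into its triconnected components. Each node $\mu$ has a skeleton graph: for a Q-node it consists of two parallel edges, one of which is an edge of $G$; for an S-node it is a simple cycle of length at least three; for a P-node it is a bundle of at least three parallel edges between two vertices; for an R-node it is a simple triconnected graph. The leaves are exactly the Q-nodes, one for each edge of $G$; no two S-nodes and no two P-nodes are adjacent in the tree. *)

theory Defs
  imports "HOL-Analysis.Analysis"
begin

definition simple_graph :: "'v set \<Rightarrow> 'v set set \<Rightarrow> bool" where
  "simple_graph V E \<longleftrightarrow> finite V \<and> (\<forall>e\<in>E. e \<subseteq> V \<and> card e = 2)"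

definition degree :: "'v set set \<Rightarrow> 'v \<Rightarrow> nat" where
  "degree E v = card {e\<in>E. v \<in> e}"

text \<open>Connectivity of the graph with vertex set Vs, using those edges of Es whose
endpoints both lie in Vs (so this also describes vertex-deleted subgraphs).\<close>

definition graph_connected :: "'v set \<Rightarrow> 'v set set \<Rightarrow> bool" where
  "graph_connected Vs Es \<longleftrightarrow>
     (\<forall>x\<in>Vs. \<forall>y\<in>Vs. (x, y) \<in> {(a, b). a \<in> Vs \<and> b \<in> Vs \<and> {a, b} \<in> Es}\<^sup>*)"

definition biconnected :: "'v set \<Rightarrow> 'v set set \<Rightarrow> bool" where
  "biconnected V E \<longleftrightarrow> card V \<ge> 3 \<and> graph_connected V E \<and>
     (\<forall>v\<in>V. graph_connected (V - {v}) E)"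

definition triconnected :: "'v set \<Rightarrow> 'v set set \<Rightarrow> bool" where
  "triconnected V E \<longleftrightarrow> finite V \<and> card V \<ge> 4 \<and>
     (\<forall>X. X \<subseteq> V \<and> card X \<le> 2 \<longrightarrow> graph_connected (V - X) E)"

text \<open>Planarity: an embedding into the plane (identified with the complex numbers),
vertices to distinct points, edges to arcs joining the images of their endpoints,
passing through no other vertex image, and pairwise meeting only in common endpoints.\<close>

definition planar :: "'v set \<Rightarrow> 'v set set \<Rightarrow> bool" where
  "planar V E \<longleftrightarrow> (\<exists>(p :: 'v \<Rightarrow> complex) (\<gamma> :: 'v set \<Rightarrow> real \<Rightarrow> complex).
     inj_on p V \<and>
     (\<forall>e\<in>E. arc (\<gamma> e) \<and> {pathstart (\<gamma> e), pathfinish (\<gamma> e)} = p ` e \<and>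
              path_image (\<gamma> e) \<inter> p ` V = p ` e) \<and>
     (\<forall>e\<in>E. \<forall>e'\<in>E. e \<noteq> e' \<longrightarrow>
              path_image (\<gamma> e) \<inter> path_image (\<gamma> e') \<subseteq> p ` (e \<inter> e')))"

datatype spqr_type = S_node | P_node | Q_node | R_node

text \<open>A candidate SPQR-tree: tree nodes and tree edges (2-element sets of nodes),
a type for each node, the vertex set of each skeleton (a subset of the vertices of G),
the real edges of G contained in each skeleton, and for each tree edge the pair of
vertices that are the endpoints of the two virtual edges associated with it.\<close>

record ('n, 'v) spqr_tree =
  nodes :: "'n set"
  tedges :: "'n set set"
  ntype :: "'n \<Rightarrow> spqr_type"
  skV :: "'n \<Rightarrow> 'v set"
  realE :: "'n \<Rightarrow> 'v set set"
  vpair :: "'n set \<Rightarrow> 'v set"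

datatype ('n, 'v) skel_edge = Real "'v set" | Virt 'n

definition tree_nbrs :: "('n, 'v) spqr_tree \<Rightarrow> 'n \<Rightarrow> 'n set" where
  "tree_nbrs T \<mu> = {\<nu>. {\<mu>, \<nu>} \<in> tedges T}"

definition skelE :: "('n, 'v) spqr_tree \<Rightarrow> 'n \<Rightarrow> ('n, 'v) skel_edge set" where
  "skelE T \<mu> = Real ` realE T \<mu> \<union> Virt ` tree_nbrs T \<mu>"

fun skel_ends :: "('n, 'v) spqr_tree \<Rightarrow> 'n \<Rightarrow> ('n, 'v) skel_edge \<Rightarrow> 'v set" where
  "skel_ends T \<mu> (Real e) = e"
| "skel_ends T \<mu> (Virt \<nu>) = vpair T {\<mu>, \<nu>}"

definition is_simple_cycle :: "'v set \<Rightarrow> 'x set \<Rightarrow> ('x \<Rightarrow> 'v set) \<Rightarrow> bool" where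
  "is_simple_cycle Vs Es ends \<longleftrightarrow> (\<exists>k (f :: nat \<Rightarrow> 'v). k \<ge> 3 \<and>
     bij_betw f {0..<k} Vs \<and>
     bij_betw ends Es {{f i, f (Suc i mod k)} | i. i < k})"

definition is_tree :: "'n set \<Rightarrow> 'n set set \<Rightarrow> bool" where
  "is_tree N TE \<longleftrightarrow> finite N \<and> N \<noteq> {} \<and> (\<forall>t\<in>TE. t \<subseteq> N \<and> card t = 2) \<and>
     graph_connected N TE \<and> card TE + 1 = card N"

definition skeleton_ok :: "('n, 'v) spqr_tree \<Rightarrow> 'n \<Rightarrow> bool" where
  "skeleton_ok T \<mu> \<longleftrightarrow>
    (case ntype T \<mu> of
       Q_node \<Rightarrow> (\<exists>e \<nu>. realE T \<mu> = {e} \<and> tree_nbrs T \<mu> = {\<nu>} \<and>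
                        vpair T {\<mu>, \<nu>} = e \<and> skV T \<mu> = e)
     | S_node \<Rightarrow> realE T \<mu> = {} \<and>
                 is_simple_cycle (skV T \<mu>) (skelE T \<mu>) (skel_ends T \<mu>)
     | P_node \<Rightarrow> realE T \<mu> = {} \<and> card (skV T \<mu>) = 2 \<and>
                 finite (skelE T \<mu>) \<and> card (skelE T \<mu>) \<ge> 3 \<and>
                 (\<forall>x\<in>skelE T \<mu>. skel_ends T \<mu> x = skV T \<mu>)
     | R_node \<Rightarrow> realE T \<mu> = {} \<and>
                 (\<forall>x\<in>skelE T \<mu>. card (skel_ends T \<mu> x) = 2 \<and> skel_ends T \<mu> x \<subseteq> skV T \<mu>) \<and>
                 inj_on (skel_ends T \<mu>) (skelE T \<mu>) \<and>
                 triconnected (skV T \<mu>) (skel_ends T \<mu> ` skelE T \<mu>))"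

text \<open>T is an SPQR-tree (with Q-nodes) of the graph (V, E): a tree whose skeletons
have the prescribed shapes, no two adjacent S-nodes and no two adjacent P-nodes,
each edge of G is the real edge of exactly one (Q-)node, and G is obtained by
merging the skeletons along the virtual edge pairs of the tree edges (vertices
of G occur in a connected subtree of nodes, and adjacent skeletons share exactly
the endpoints of their common virtual edge), deleting the virtual edges.\<close>

definition is_SPQR_tree :: "'v set \<Rightarrow> 'v set set \<Rightarrow> ('n, 'v) spqr_tree \<Rightarrow> bool" where
  "is_SPQR_tree V E T \<longleftrightarrow>
    is_tree (nodes T) (tedges T) \<and>
    (\<forall>\<mu>\<in>nodes T. skV T \<mu> \<subseteq> V \<and> realE T \<mu> \<subseteq> E \<and>
                 (\<forall>e\<in>realE T \<mu>. e \<subseteq> skV T \<mu>) \<and> skeleton_ok T \<mu>) \<and>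
    (\<forall>e\<in>E. \<exists>!\<mu>. \<mu> \<in> nodes T \<and> e \<in> realE T \<mu>) \<and>
    (\<forall>t\<in>tedges T. card (vpair T t) = 2 \<and> (\<forall>\<mu>\<in>t. vpair T t \<subseteq> skV T \<mu>)) \<and>
    (\<forall>\<mu> \<nu>. {\<mu>, \<nu>} \<in> tedges T \<longrightarrow> skV T \<mu> \<inter> skV T \<nu> = vpair T {\<mu>, \<nu>}) \<and>
    (\<forall>\<mu> \<nu>. {\<mu>, \<nu>} \<in> tedges T \<longrightarrow>
        \<not> (ntype T \<mu> = S_node \<and> ntype T \<nu> = S_node) \<and>
        \<not> (ntype T \<mu> = P_node \<and> ntype T \<nu> = P_node)) \<and>
    (\<Union>\<mu>\<in>nodes T. skV T \<mu>) = V \<and>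
    (\<forall>v\<in>V. graph_connected {\<mu>\<in>nodes T. v \<in> skV T \<mu>} (tedges T))"

end

theory Submission
  imports Defs
begin

lemma conn_cover:
  assumes "graph_connected Vs Es" "x \<in> Vs" "y \<in> Vs" "x \<noteq> y"
  shows "\<exists>e\<in>Es. x \<in> e"
proof -
  have "(x, y) \<in> {(a, b). a \<in> Vs \<and> b \<in> Vs \<and> {a, b} \<in> Es}\<^sup>*"
    using assms unfolding graph_connected_def by blast
  then show ?thesis using assms(4)
    by (cases rule: converse_rtranclE) auto
qed

lemma deg_sum:
  assumes "finite N" "\<forall>t\<in>TE. t \<subseteq> N \<and> card t = 2" "finite TE"
  shows "(\<Sum>\<mu>\<in>N. card {t\<in>TE. \<mu> \<in> t}) = 2 * card TE"
proof -
  have "(\<Sum>\<mu>\<in>N. card {t\<in>TE. \<mu> \<in> t}) = (\<Sum>\<mu>\<in>N. \<Sum>t\<in>TE. if \<mu> \<in> t then 1 else 0)"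
    using assms(3) by (intro sum.cong refl) (simp add: sum.If_cases Int_def conj_commute)
  also have "\<dots> = (\<Sum>t\<in>TE. \<Sum>\<mu>\<in>N. if \<mu> \<in> t then 1 else 0)"
    by (rule sum.swap)
  also have "\<dots> = (\<Sum>t\<in>TE. card (N \<inter> t))"
    using assms(1) by (simp add: sum.If_cases)
  also have "\<dots> = (\<Sum>t\<in>TE. 2)"
    using assms(2) by (intro sum.cong) (auto simp: Int_absorb1)
  finally show ?thesis by simp
qed

lemma suc_mod_unique:
  assumes "i < k" "Suc i mod k = j"
  shows "i = (j + k - 1) mod k"
proof (cases "Suc i < k")
  case True
  have "j + k - 1 = i + k" using True assms by simp
  then show ?thesis using assms True by simp
next
  case False
  then have "Suc i = k" using assms by simp
  then show ?thesis using assms by simp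
qed

lemma card_le1_sub:
  assumes "finite A" "card A \<le> 1"
  shows "\<exists>a. A \<subseteq> {a}"
proof (cases "A = {}")
  case True then show ?thesis by blast
next
  case False
  then obtain x where x: "x \<in> A" by blast
  have "\<forall>a1\<in>A. \<forall>a2\<in>A. a1 = a2" using card_le_Suc0_iff_eq[OF assms(1)] assms(2) by simp
  then have "A \<subseteq> {x}" using x by blast
  then show ?thesis by blast
qed

theorem mainTheorem2:
  fixes V :: "'v set" and E :: "'v set set" and T :: "('n, 'v) spqr_tree"
  assumes "simple_graph V E"
    and "planar V E"
    and "biconnected V E"
    and "\<forall>v\<in>V. degree E v \<ge> 3"
    and "is_SPQR_tree V E T"
  shows "\<exists>\<mu> \<nu>. {\<mu>, \<nu>} \<in> tedges T \<and> ntype T \<mu> = Q_node \<and>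
                (ntype T \<nu> = P_node \<or> ntype T \<nu> = R_node)"
proof (rule ccontr)
  assume neg: "\<not> ?thesis"
  define N where "N = nodes T"
  define TE where "TE = tedges T"
  note sp = assms(5)[unfolded is_SPQR_tree_def]
  have tree: "is_tree N TE" using sp unfolding N_def TE_def by simp
  have nprop: "\<And>\<mu>. \<mu> \<in> N \<Longrightarrow> skV T \<mu> \<subseteq> V \<and> realE T \<mu> \<subseteq> E \<and> skeleton_ok T \<mu>"
    using sp unfolding N_def by simp
  have uniq: "\<And>e. e \<in> E \<Longrightarrow> \<exists>!\<mu>. \<mu> \<in> N \<and> e \<in> realE T \<mu>"
    using sp unfolding N_def by simp
  have vp: "\<And>t. t \<in> TE \<Longrightarrow> card (vpair T t) = 2"
    using sp unfolding TE_def by simp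
  have inter: "\<And>\<mu> \<nu>. {\<mu>, \<nu>} \<in> TE \<Longrightarrow> skV T \<mu> \<inter> skV T \<nu> = vpair T {\<mu>, \<nu>}"
    using sp unfolding TE_def by simp
  have unionV: "(\<Union>\<mu>\<in>N. skV T \<mu>) = V"
    using sp unfolding N_def by simp
  have connv: "\<And>v. v \<in> V \<Longrightarrow> graph_connected {\<mu>\<in>N. v \<in> skV T \<mu>} TE"
    using sp unfolding N_def TE_def by simp
  have finN: "finite N" and Nne: "N \<noteq> {}" and TEsub: "\<And>t. t \<in> TE \<Longrightarrow> t \<subseteq> N \<and> card t = 2"
    and cardTE: "card TE + 1 = card N" and connN: "graph_connected N TE"
    using tree unfolding is_tree_def by auto
  have finTE: "finite TE"
    using finN TEsub by (meson Pow_iff finite_Pow_iff finite_subset subsetI)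
  have nbrsE: "\<And>\<mu> \<nu>. \<nu> \<in> tree_nbrs T \<mu> \<longleftrightarrow> {\<mu>, \<nu>} \<in> TE"
    unfolding tree_nbrs_def TE_def by simp
  have edgeN: "\<And>\<mu> \<nu>. {\<mu>, \<nu>} \<in> TE \<Longrightarrow> \<mu> \<in> N \<and> \<nu> \<in> N \<and> \<mu> \<noteq> \<nu>"
    using TEsub by fastforce
  have noQPR: "\<And>\<mu> \<nu>. {\<mu>, \<nu>} \<in> TE \<Longrightarrow> ntype T \<mu> = Q_node \<Longrightarrow>
      ntype T \<nu> \<noteq> P_node \<and> ntype T \<nu> \<noteq> R_node"
    using neg unfolding TE_def by blast
  have Qn: "\<And>\<mu>. \<mu> \<in> N \<Longrightarrow> ntype T \<mu> = Q_node \<Longrightarrow> \<exists>e \<nu>. realE T \<mu> = {e} \<and>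
      tree_nbrs T \<mu> = {\<nu>} \<and> vpair T {\<mu>, \<nu>} = e \<and> skV T \<mu> = e"
    using nprop unfolding skeleton_ok_def by fastforce
  have nonQ: "\<And>\<mu>. \<mu> \<in> N \<Longrightarrow> ntype T \<mu> \<noteq> Q_node \<Longrightarrow> realE T \<mu> = {}"
    using nprop unfolding skeleton_ok_def by (fastforce split: spqr_type.splits)
  have cardV: "card V \<ge> 3" using assms(3) unfolding biconnected_def by blast
  have finV: "finite V" using assms(1) unfolding simple_graph_def by blast
  have Ecard: "\<And>e. e \<in> E \<Longrightarrow> card e = 2 \<and> e \<subseteq> V" using assms(1) unfolding simple_graph_def by blast
  have finE: "finite E" using finV Ecard by (meson Pow_iff finite_Pow_iff finite_subset subsetI)
  have noQQ: "\<And>\<mu> \<nu>. {\<mu>, \<nu>} \<in> TE \<Longrightarrow> ntype T \<mu> = Q_node \<Longrightarrow> ntype T \<nu> = Q_node \<Longrightarrow> False"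
  proof -
    fix \<mu> \<nu> assume e: "{\<mu>, \<nu>} \<in> TE" and q1: "ntype T \<mu> = Q_node" and q2: "ntype T \<nu> = Q_node"
    have mn: "\<mu> \<in> N" "\<nu> \<in> N" using edgeN[OF e] by auto
    obtain e1 \<nu>1 where h1: "realE T \<mu> = {e1}" "tree_nbrs T \<mu> = {\<nu>1}" "vpair T {\<mu>, \<nu>1} = e1" "skV T \<mu> = e1"
      using Qn[OF mn(1) q1] by blast
    obtain e2 \<mu>1 where h2: "realE T \<nu> = {e2}" "tree_nbrs T \<nu> = {\<mu>1}" "vpair T {\<nu>, \<mu>1} = e2" "skV T \<nu> = e2"
      using Qn[OF mn(2) q2] by blast
    have "\<nu> \<in> tree_nbrs T \<mu>" using nbrsE e by blast
    then have n1: "\<nu>1 = \<nu>" using h1(2) by simp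
    have "{\<nu>, \<mu>} \<in> TE" using e by (simp add: insert_commute)
    then have "\<mu> \<in> tree_nbrs T \<nu>" using nbrsE by blast
    then have m1: "\<mu>1 = \<mu>" using h2(2) by simp
    have "e2 = vpair T {\<mu>, \<nu>}" using h2(3) m1 by (simp add: insert_commute)
    then have "e1 = e2" using h1(3) n1 by simp
    have sub: "N \<subseteq> {\<mu>, \<nu>}"
    proof
      fix x assume "x \<in> N"
      then have "(\<mu>, x) \<in> {(a, b). a \<in> N \<and> b \<in> N \<and> {a, b} \<in> TE}\<^sup>*"
        using connN mn unfolding graph_connected_def by blast
      then show "x \<in> {\<mu>, \<nu>}"
      proof (induction rule: rtrancl_induct)
        case base then show ?case by simp
      next
        case (step y z)
        then have "z \<in> tree_nbrs T y" using nbrsE by auto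
        then show ?case using step(3) h1(2) h2(2) n1 m1 by auto
      qed
    qed
    have "V \<subseteq> e1" using unionV sub h1(4) h2(4) \<open>e1 = e2\<close> by auto
    moreover have "e1 \<in> E" using nprop mn h1(1) by blast
    moreover have "finite e1" using Ecard[OF \<open>e1 \<in> E\<close>] by (intro card_ge_0_finite) simp
    ultimately have "card V \<le> 2" using Ecard card_mono by metis
    then show False using cardV by simp
  qed
  define Qs where "Qs = {\<mu>\<in>N. ntype T \<mu> = Q_node}"
  define N' where "N' = N - Qs"
  define TEq where "TEq = {t\<in>TE. \<exists>\<rho>\<in>t. ntype T \<rho> = Q_node}"
  define TE' where "TE' = {t\<in>TE. \<forall>\<rho>\<in>t. ntype T \<rho> \<noteq> Q_node}"
  have split: "card TE = card TEq + card TE'"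
  proof -
    have u: "TE = TEq \<union> TE'" unfolding TEq_def TE'_def by auto
    have "card (TEq \<union> TE') = card TEq + card TE'"
      by (rule card_Un_disjoint) (use finTE in \<open>auto simp: TEq_def TE'_def\<close>)
    then show ?thesis using u by simp
  qed
  have "card Qs \<le> card TEq"
  proof -
    define g where "g \<rho> = {\<rho>} \<union> tree_nbrs T \<rho>" for \<rho>
    have gin: "g ` Qs \<subseteq> TEq"
    proof
      fix t assume "t \<in> g ` Qs"
      then obtain \<rho> where r: "\<rho> \<in> Qs" "t = g \<rho>" by blast
      have rN: "\<rho> \<in> N" "ntype T \<rho> = Q_node" using r(1) unfolding Qs_def by auto
      obtain e \<nu> where nb: "tree_nbrs T \<rho> = {\<nu>}" using Qn[OF rN] by blast
      then have "{\<rho>, \<nu>} \<in> TE" using nbrsE[where \<mu>=\<rho> and \<nu>=\<nu>] by simp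
      moreover have "t = {\<rho>, \<nu>}" using r(2) nb unfolding g_def by auto
      ultimately show "t \<in> TEq" using rN(2) unfolding TEq_def by auto
    qed
    have "inj_on g Qs"
    proof
      fix a b assume a: "a \<in> Qs" and b: "b \<in> Qs" and gab: "g a = g b"
      have aN: "a \<in> N" "ntype T a = Q_node" using a unfolding Qs_def by auto
      obtain e \<nu> where na: "tree_nbrs T a = {\<nu>}" using Qn[OF aN] by blast
      show "a = b"
      proof (rule ccontr)
        assume "a \<noteq> b"
        then have "b = \<nu>" using gab na unfolding g_def by auto
        then have "{a, b} \<in> TE" using na nbrsE[where \<mu>=a and \<nu>=b] by simp
        moreover have "ntype T b = Q_node" using b unfolding Qs_def by simp
        ultimately show False using noQQ aN(2) by blast
      qed
    qed
    moreover have "finite TEq" using finTE unfolding TEq_def by simp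
    ultimately show ?thesis using gin card_inj_on_le by blast
  qed
  have cardN: "card N = card Qs + card N'"
  proof -
    have QN: "Qs \<subseteq> N" unfolding Qs_def by blast
    then have fQ: "finite Qs" using finN finite_subset by blast
    have "card N' = card N - card Qs" unfolding N'_def by (rule card_Diff_subset[OF fQ QN])
    moreover have "card Qs \<le> card N" by (rule card_mono[OF finN QN])
    ultimately show ?thesis by simp
  qed
  have N'ne: "N' \<noteq> {}"
  proof
    assume "N' = {}"
    obtain \<rho> where r: "\<rho> \<in> N" using Nne by blast
    then have q: "ntype T \<rho> = Q_node" using \<open>N' = {}\<close> unfolding N'_def Qs_def by blast
    obtain e \<nu> where "tree_nbrs T \<rho> = {\<nu>}" using Qn[OF r q] by blast
    then have en: "{\<rho>, \<nu>} \<in> TE" using nbrsE[where \<mu>=\<rho> and \<nu>=\<nu>] by simp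
    then have "\<nu> \<in> N" using edgeN[OF en] by blast
    then have "ntype T \<nu> = Q_node" using \<open>N' = {}\<close> unfolding N'_def Qs_def by blast
    then show False using noQQ[OF en q] by blast
  qed
  have finN': "finite N'" using finN unfolding N'_def by simp
  have "card N' \<ge> 1" using N'ne finN' by (simp add: Suc_leI card_gt_0_iff)
  have TE'lt: "2 * card TE' < 2 * card N'"
    using split cardTE cardN \<open>card Qs \<le> card TEq\<close> \<open>card N' \<ge> 1\<close> by linarith
  have TE'sub: "\<forall>t\<in>TE'. t \<subseteq> N' \<and> card t = 2"
    using TEsub unfolding TE'_def N'_def Qs_def by blast
  have finTE': "finite TE'" using finTE unfolding TE'_def by simp
  have "\<exists>\<mu>0\<in>N'. card {t\<in>TE'. \<mu>0 \<in> t} < 2"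
  proof (rule ccontr)
    assume "\<not> ?thesis"
    then have "(\<Sum>\<mu>\<in>N'. 2) \<le> (\<Sum>\<mu>\<in>N'. card {t\<in>TE'. \<mu> \<in> t})"
      by (intro sum_mono) (simp add: not_less)
    then show False using deg_sum[OF finN' TE'sub finTE'] TE'lt by simp
  qed
  then obtain \<mu>0 where m0: "\<mu>0 \<in> N'" and dm0: "card {t\<in>TE'. \<mu>0 \<in> t} < 2" by blast
  have m0N: "\<mu>0 \<in> N" and m0Q: "ntype T \<mu>0 \<noteq> Q_node" using m0 unfolding N'_def Qs_def by auto
  define nQ where "nQ = {\<nu>. {\<mu>0, \<nu>} \<in> TE \<and> ntype T \<nu> \<noteq> Q_node}"
  have "card nQ \<le> card {t\<in>TE'. \<mu>0 \<in> t}"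
  proof (rule card_inj_on_le)
    show "inj_on (\<lambda>\<nu>. {\<mu>0, \<nu>}) nQ" by (auto simp: inj_on_def doubleton_eq_iff)
    show "(\<lambda>\<nu>. {\<mu>0, \<nu>}) ` nQ \<subseteq> {t\<in>TE'. \<mu>0 \<in> t}"
      using m0Q unfolding nQ_def TE'_def by auto
    show "finite {t\<in>TE'. \<mu>0 \<in> t}" using finTE' by simp
  qed
  then have cnQ: "card nQ \<le> 1" using dm0 by simp
  have finnb: "finite (tree_nbrs T \<mu>0)"
  proof (rule finite_subset[OF _ finN])
    show "tree_nbrs T \<mu>0 \<subseteq> N"
    proof
      fix \<nu> assume "\<nu> \<in> tree_nbrs T \<mu>0"
      then have "{\<mu>0, \<nu>} \<in> TE" using nbrsE[where \<mu>=\<mu>0 and \<nu>=\<nu>] by simp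
      then show "\<nu> \<in> N" using edgeN[where \<mu>=\<mu>0 and \<nu>=\<nu>] by blast
    qed
  qed
  have finnQ: "finite nQ" 
  proof (rule finite_subset[OF _ finN])
    show "nQ \<subseteq> N"
    proof
      fix \<nu> assume "\<nu> \<in> nQ"
      then have "{\<mu>0, \<nu>} \<in> TE" unfolding nQ_def by simp
      then show "\<nu> \<in> N" using edgeN[where \<mu>=\<mu>0 and \<nu>=\<nu>] by blast
    qed
  qed
  obtain \<nu>0 where nQsub: "nQ \<subseteq> {\<nu>0}"
    using card_le1_sub[OF finnQ cnQ] by blast
  have Qnb_S: "\<And>\<nu>. \<nu> \<in> tree_nbrs T \<mu>0 \<Longrightarrow> ntype T \<nu> = Q_node \<Longrightarrow> ntype T \<mu>0 = S_node"
  proof -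
    fix \<nu> assume "\<nu> \<in> tree_nbrs T \<mu>0" "ntype T \<nu> = Q_node"
    then have "{\<mu>0, \<nu>} \<in> TE" using nbrsE[where \<mu>=\<mu>0 and \<nu>=\<nu>] by simp
    then have e': "{\<nu>, \<mu>0} \<in> TE" by (simp add: insert_commute)
    have "ntype T \<mu>0 \<noteq> P_node \<and> ntype T \<mu>0 \<noteq> R_node"
      using noQPR[OF e' \<open>ntype T \<nu> = Q_node\<close>] by blast
    then show "ntype T \<mu>0 = S_node" using m0Q by (cases "ntype T \<mu>0") auto
  qed
  have two_nb: "card (tree_nbrs T \<mu>0) \<ge> 2 \<Longrightarrow> ntype T \<mu>0 = S_node"
  proof -
    assume c2: "card (tree_nbrs T \<mu>0) \<ge> 2"
    show "ntype T \<mu>0 = S_node"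
    proof (rule ccontr)
      assume nS: "ntype T \<mu>0 \<noteq> S_node"
      have "tree_nbrs T \<mu>0 \<subseteq> nQ"
      proof
        fix \<nu> assume nu: "\<nu> \<in> tree_nbrs T \<mu>0"
        have "ntype T \<nu> \<noteq> Q_node"
        proof
          assume "ntype T \<nu> = Q_node"
          then show False using Qnb_S[OF nu] nS by simp
        qed
        moreover have "{\<mu>0, \<nu>} \<in> TE" using nu nbrsE[where \<mu>=\<mu>0 and \<nu>=\<nu>] by simp
        ultimately show "\<nu> \<in> nQ" unfolding nQ_def by simp
      qed
      then have "card (tree_nbrs T \<mu>0) \<le> card nQ" by (rule card_mono[OF finnQ])
      then have "card (tree_nbrs T \<mu>0) \<le> 1" using cnQ by linarith
      then show False using c2 by simp
    qed
  qed
  have skE: "skelE T \<mu>0 = Virt ` tree_nbrs T \<mu>0"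
    using nonQ[OF m0N m0Q] unfolding skelE_def by simp
  have sk_le: "card (skelE T \<mu>0) \<le> card (tree_nbrs T \<mu>0)"
    unfolding skE by (rule card_image_le[OF finnb])
  have ok: "skeleton_ok T \<mu>0" using nprop[OF m0N] by blast
  show False
  proof (cases "ntype T \<mu>0")
    case Q_node then show ?thesis using m0Q by simp
  next
    case P_node
    then have "card (skelE T \<mu>0) \<ge> 3" using ok unfolding skeleton_ok_def by simp
    then have "card (tree_nbrs T \<mu>0) \<ge> 3" using sk_le by linarith
    then show ?thesis using two_nb P_node by simp
  next
    case R_node
    let ?Es = "skel_ends T \<mu>0 ` skelE T \<mu>0"
    have tri: "triconnected (skV T \<mu>0) ?Es" and c2: "\<forall>x\<in>skelE T \<mu>0. card (skel_ends T \<mu>0 x) = 2"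
      using ok R_node unfolding skeleton_ok_def by auto
    have c4: "card (skV T \<mu>0) \<ge> 4" and finS: "finite (skV T \<mu>0)"
      using tri unfolding triconnected_def by auto
    have gc: "graph_connected (skV T \<mu>0 - {}) ?Es"
    proof -
      have all: "\<forall>X. X \<subseteq> skV T \<mu>0 \<and> card X \<le> 2 \<longrightarrow> graph_connected (skV T \<mu>0 - X) ?Es"
        using tri unfolding triconnected_def by blast
      show ?thesis using all[rule_format, of "{}"] by simp
    qed
    have cov: "skV T \<mu>0 \<subseteq> \<Union> ?Es"
    proof
      fix x assume x: "x \<in> skV T \<mu>0"
      have "card (skV T \<mu>0 - {x}) \<ge> 3" using c4 x finS by simp
      then have "skV T \<mu>0 - {x} \<noteq> {}" by (intro notI) simp
      then obtain y where "y \<in> skV T \<mu>0 - {x}" by blast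
      then have y: "y \<in> skV T \<mu>0 - {}" "x \<noteq> y" by auto
      have x': "x \<in> skV T \<mu>0 - {}" using x by simp
      obtain e where "e \<in> ?Es" "x \<in> e" using conn_cover[OF gc x' y(1) y(2)] by blast
      then show "x \<in> \<Union> ?Es" by blast
    qed
    show ?thesis
    proof (cases "card (tree_nbrs T \<mu>0) \<ge> 2")
      case True then show ?thesis using two_nb R_node by simp
    next
      case False
      have fsk: "finite (skelE T \<mu>0)" using skE finnb by simp
      have "card (skelE T \<mu>0) \<le> 1" using sk_le False by linarith
      then have cE: "card ?Es \<le> 1" using card_image_le[OF fsk, of "skel_ends T \<mu>0"] by linarith
      have fE: "finite ?Es" using fsk by simp
      obtain e0 where e0: "?Es \<subseteq> {e0}" using card_le1_sub[OF fE cE] by blast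
      have "card (\<Union> ?Es) \<le> 2"
      proof (cases "?Es = {}")
        case True then show ?thesis by simp
      next
        case False
        then have "?Es = {e0}" using e0 by blast
        then have "e0 \<in> ?Es" by simp
        then obtain x where "x \<in> skelE T \<mu>0" "e0 = skel_ends T \<mu>0 x" by (rule imageE)
        then have "card e0 = 2" using c2 by simp
        then show ?thesis using \<open>?Es = {e0}\<close> by simp
      qed
      moreover have "finite (\<Union> ?Es)"
      proof (rule finite_Union[OF fE])
        fix e assume "e \<in> ?Es"
        then obtain x where "x \<in> skelE T \<mu>0" "e = skel_ends T \<mu>0 x" by (rule imageE)
        then show "finite e" using c2 by (intro card_ge_0_finite) simp
      qed
      ultimately have "card (skV T \<mu>0) \<le> 2" using card_mono[OF _ cov] by linarith
      then show ?thesis using c4 by simp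
    qed
  next
    case S_node
    have cyc: "is_simple_cycle (skV T \<mu>0) (skelE T \<mu>0) (skel_ends T \<mu>0)"
      using ok S_node unfolding skeleton_ok_def by simp
    obtain k f where k3: "k \<ge> 3" and bf: "bij_betw f {0..<k} (skV T \<mu>0)"
      and be: "bij_betw (skel_ends T \<mu>0) (skelE T \<mu>0) {{f i, f (Suc i mod k)} | i. i < k}"
      using cyc unfolding is_simple_cycle_def by blast
    have cardS: "card (skV T \<mu>0) = k" using bij_betw_same_card[OF bf] by simp
    have finS: "finite (skV T \<mu>0)" using bij_betw_finite[OF bf] by simp
    define W where "W = (if \<nu>0 \<in> nQ then vpair T {\<mu>0, \<nu>0} else {})"
    have cWf: "card W \<le> 2 \<and> finite W"
    proof (cases "\<nu>0 \<in> nQ")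
      case True
      then have "{\<mu>0, \<nu>0} \<in> TE" unfolding nQ_def by simp
      then have "card W = 2" using vp unfolding W_def using True by simp
      then show ?thesis by (simp add: card_ge_0_finite)
    next
      case False then show ?thesis unfolding W_def by simp
    qed
    have "skV T \<mu>0 \<subseteq> (skV T \<mu>0 - W) \<union> W" by blast
    then have "card (skV T \<mu>0) \<le> card ((skV T \<mu>0 - W) \<union> W)"
      by (rule card_mono[rotated]) (use finS cWf in auto)
    also have "\<dots> \<le> card (skV T \<mu>0 - W) + card W" by (rule card_Un_le)
    finally have "card (skV T \<mu>0 - W) \<ge> 1" using cWf cardS k3 by linarith
    then have "skV T \<mu>0 - W \<noteq> {}" by (intro notI) simp
    then obtain w where wS: "w \<in> skV T \<mu>0" and wW: "w \<notin> W" by blast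
    have wV: "w \<in> V" using nprop[OF m0N] wS by blast
    obtain j where j: "j < k" "w = f j"
      using wS bij_betw_imp_surj_on[OF bf] by (metis atLeastLessThan_iff imageE)
    define Nw where "Nw = {x\<in>N. w \<in> skV T x}"
    have reach: "\<And>\<rho>. (\<mu>0, \<rho>) \<in> {(a, b). a \<in> Nw \<and> b \<in> Nw \<and> {a, b} \<in> TE}\<^sup>* \<Longrightarrow>
                  \<rho> = \<mu>0 \<or> (\<rho> \<in> tree_nbrs T \<mu>0 \<and> ntype T \<rho> = Q_node)"
    proof -
      fix \<rho> assume "(\<mu>0, \<rho>) \<in> {(a, b). a \<in> Nw \<and> b \<in> Nw \<and> {a, b} \<in> TE}\<^sup>*"
      then show "\<rho> = \<mu>0 \<or> (\<rho> \<in> tree_nbrs T \<mu>0 \<and> ntype T \<rho> = Q_node)"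
      proof (induction rule: rtrancl_induct)
        case base then show ?case by simp
      next
        case (step y z)
        then have yz: "{y, z} \<in> TE" and wz: "w \<in> skV T z" and wy: "w \<in> skV T y"
          unfolding Nw_def by auto
        show ?case
        proof (cases "y = \<mu>0")
          case True
          show ?thesis
          proof (cases "ntype T z = Q_node")
            case True
            then show ?thesis using yz \<open>y = \<mu>0\<close> nbrsE[where \<mu>=\<mu>0 and \<nu>=z] by simp
          next
            case False
            then have "z \<in> nQ" using yz \<open>y = \<mu>0\<close> unfolding nQ_def by simp
            then have z0: "z = \<nu>0" "\<nu>0 \<in> nQ" using nQsub by auto
            then have "W = skV T \<mu>0 \<inter> skV T \<nu>0" unfolding W_def
              using inter[of \<mu>0 \<nu>0] yz \<open>y = \<mu>0\<close> by simp
            then have "w \<in> W" using wS wz z0 by simp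
            then show ?thesis using wW by simp
          qed
        next
          case False
          then have yQ: "y \<in> tree_nbrs T \<mu>0" "ntype T y = Q_node" using step.IH by auto
          have yN: "y \<in> N" using edgeN[OF yz] by simp
          obtain e' \<nu>' where ny: "tree_nbrs T y = {\<nu>'}" using Qn[OF yN yQ(2)] by blast
          have "{\<mu>0, y} \<in> TE" using yQ(1) nbrsE[where \<mu>=\<mu>0 and \<nu>=y] by simp
          then have "{y, \<mu>0} \<in> TE" by (simp add: insert_commute)
          then have "\<mu>0 \<in> tree_nbrs T y" using nbrsE[where \<mu>=y and \<nu>=\<mu>0] by simp
          moreover have "z \<in> tree_nbrs T y" using yz nbrsE[where \<mu>=y and \<nu>=z] by simp
          ultimately show ?thesis using ny by simp
        qed
      qed
    qed
    define J where "J = {j, (j + k - 1) mod k}"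
    have sub: "{e\<in>E. w \<in> e} \<subseteq> (\<lambda>i. {f i, f (Suc i mod k)}) ` J"
    proof
      fix e assume "e \<in> {e\<in>E. w \<in> e}"
      then have eE: "e \<in> E" and we: "w \<in> e" by auto
      obtain \<rho> where \<rho>: "\<rho> \<in> N" "e \<in> realE T \<rho>" using uniq[OF eE] by blast
      have \<rho>Q: "ntype T \<rho> = Q_node"
      proof (rule ccontr)
        assume "ntype T \<rho> \<noteq> Q_node"
        then show False using nonQ[OF \<rho>(1)] \<rho>(2) by simp
      qed
      obtain e1 \<nu>1 where h: "realE T \<rho> = {e1}" "tree_nbrs T \<rho> = {\<nu>1}" "vpair T {\<rho>, \<nu>1} = e1"
        "skV T \<rho> = e1" using Qn[OF \<rho>(1) \<rho>Q] by blast
      have ee1: "e1 = e" using h(1) \<rho>(2) by simp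
      have "w \<in> skV T \<rho>" using h(4) ee1 we by simp
      then have \<rho>w: "\<rho> \<in> Nw" using \<rho>(1) unfolding Nw_def by simp
      have m0w: "\<mu>0 \<in> Nw" using m0N wS unfolding Nw_def by simp
      have "graph_connected Nw TE" using connv[OF wV] unfolding Nw_def by simp
      then have "(\<mu>0, \<rho>) \<in> {(a, b). a \<in> Nw \<and> b \<in> Nw \<and> {a, b} \<in> TE}\<^sup>*"
        using \<rho>w m0w unfolding graph_connected_def by blast
      then have "\<rho> = \<mu>0 \<or> (\<rho> \<in> tree_nbrs T \<mu>0 \<and> ntype T \<rho> = Q_node)" by (rule reach)
      moreover have "\<rho> \<noteq> \<mu>0" using \<rho>Q m0Q by auto
      ultimately have \<rho>nb: "\<rho> \<in> tree_nbrs T \<mu>0" by simp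
      then have "{\<mu>0, \<rho>} \<in> TE" using nbrsE[where \<mu>=\<mu>0 and \<nu>=\<rho>] by simp
      then have "{\<rho>, \<mu>0} \<in> TE" by (simp add: insert_commute)
      then have "\<mu>0 \<in> tree_nbrs T \<rho>" using nbrsE[where \<mu>=\<rho> and \<nu>=\<mu>0] by simp
      then have "\<nu>1 = \<mu>0" using h(2) by simp
      then have "e = vpair T {\<mu>0, \<rho>}" using h(3) ee1 by (simp add: insert_commute)
      then have ee: "e = skel_ends T \<mu>0 (Virt \<rho>)" by simp
      have vr: "Virt \<rho> \<in> skelE T \<mu>0" using skE \<rho>nb by simp
      have "e \<in> skel_ends T \<mu>0 ` skelE T \<mu>0" by (rule image_eqI[where f="skel_ends T \<mu>0" and x="Virt \<rho>", OF ee vr])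
      then have "e \<in> {{f i, f (Suc i mod k)} | i. i < k}" using bij_betw_imp_surj_on[OF be] by simp
      then obtain i where i: "i < k" "e = {f i, f (Suc i mod k)}" by blast
      have injf: "inj_on f {0..<k}" using bf by (rule bij_betw_imp_inj_on)
      have "i \<in> J"
      proof (cases "w = f i")
        case True
        then have "f i = f j" using j by simp
        then have "i = j" using injf i(1) j(1) by (simp add: inj_on_eq_iff)
        then show ?thesis unfolding J_def by simp
      next
        case False
        then have "w = f (Suc i mod k)" using we i(2) by auto
        then have "f (Suc i mod k) = f j" using j by simp
        moreover have "Suc i mod k < k" using k3 by simp
        ultimately have "Suc i mod k = j" using injf j(1) by (simp add: inj_on_eq_iff)
        then have "i = (j + k - 1) mod k" by (rule suc_mod_unique[OF i(1)])
        then show ?thesis unfolding J_def by simp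
      qed
      then show "e \<in> (\<lambda>i. {f i, f (Suc i mod k)}) ` J" using i(2) by blast
    qed
    have "card ((\<lambda>i. {f i, f (Suc i mod k)}) ` J) \<le> card J"
      by (rule card_image_le) (simp add: J_def)
    also have "card J \<le> 2" unfolding J_def by (simp add: card_insert_le_m1)
    finally have "card {e\<in>E. w \<in> e} \<le> 2"
      using card_mono[OF _ sub] J_def by (meson finite.emptyI finite.insertI finite_imageI le_trans)
    moreover have "degree E w \<ge> 3" using assms(4) wV by blast
    ultimately show ?thesis unfolding degree_def by simp
  qed
qed

end
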